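(* Let $s=0$ and $\lambda\in\mathbb{C}$. Every odd superderivation of $\mathfrak{L}^0_\lambda$ of degree $0$ is inner; more precisely, it equals $\mathrm{ad}(aG_0+bH_0)$ for some $a,b\in\mathbb{C}$.
   Context: For $s\in\{0,\tfrac12\}$ and $\lambda\in\mathbb{C}$, $\mathfrak{L}^s_\lambda$ is the complex Lie superalgebra with basis $\{L_m,I_m,G_p,H_p : m\in\mathbb{Z},\ p\in s+\mathbb{Z}\}$, even part spanned by the $L_m,I_m$, odd part spanned by the $G_p,H_p$, and brackets $[L_m,L_n]=(m-n)L_{m+n}$, $[L_m,I_n]=(m-n)I_{m+n}$, $[L_m,H_p]=(\tfrac m2-p)H_{m+p}$, $[L_m,G_p]=(\tfrac m2-p)G_{m+p}+\lambda(m+1)H_{m+p}$, $[I_m,G_p]=(m-2p)H_{m+p}$, $[G_p,G_q]=I_{p+q}$, plus those given by super-antisymmetry $[y,x]=-(-1)^{|x||y|}[x,y]$; all other brackets of basis elements are zero. $\mathfrak{L}_r$ is spanned by basis elements of index $r$. A superderivation of parity $a$ is a linear map $D$ shifting parity by $a$ with $D([x,y])=[D(x),y]+(-1)^{a|x|}[x,D(y)]$ for homogeneous $x,y$; it has degree $r$ if $D(\mathfrak{L}_q)\subset\mathfrak{L}_{q+r}$. $\mathrm{ad}\,x(y)=[x,y]$. *)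

theory Defs
  imports Complex_Main
begin

text \<open>Basis of the Lie superalgebra L^s_lambda for s = 0: all indices are integers.\<close>
datatype basis = L int | I int | G int | H int

type_synonym elem = "basis \<Rightarrow> complex"

definition supp :: "elem \<Rightarrow> basis set" where
  "supp x = {b. x b \<noteq> 0}"

definition Alg :: "elem set" where
  "Alg = {x. finite (supp x)}"

definition e :: "basis \<Rightarrow> elem" where
  "e b = (\<lambda>c. if c = b then 1 else 0)"

definition idx :: "basis \<Rightarrow> int" where
  "idx b = (case b of L m \<Rightarrow> m | I m \<Rightarrow> m | G p \<Rightarrow> p | H p \<Rightarrow> p)"

definition is_odd_basis :: "basis \<Rightarrow> bool" where
  "is_odd_basis b = (case b of L _ \<Rightarrow> False | I _ \<Rightarrow> False | G _ \<Rightarrow> True | H _ \<Rightarrow> True)"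

text \<open>Bracket of basis elements (including those given by super-antisymmetry).\<close>
fun br0 :: "complex \<Rightarrow> basis \<Rightarrow> basis \<Rightarrow> elem" where
  "br0 lam (L m) (L n) = (\<lambda>c. of_int (m - n) * e (L (m + n)) c)"
| "br0 lam (L m) (I n) = (\<lambda>c. of_int (m - n) * e (I (m + n)) c)"
| "br0 lam (I n) (L m) = (\<lambda>c. - of_int (m - n) * e (I (m + n)) c)"
| "br0 lam (L m) (H p) = (\<lambda>c. (of_int m / 2 - of_int p) * e (H (m + p)) c)"
| "br0 lam (H p) (L m) = (\<lambda>c. - (of_int m / 2 - of_int p) * e (H (m + p)) c)"
| "br0 lam (L m) (G p) = (\<lambda>c. (of_int m / 2 - of_int p) * e (G (m + p)) c
                              + lam * of_int (m + 1) * e (H (m + p)) c)"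
| "br0 lam (G p) (L m) = (\<lambda>c. - ((of_int m / 2 - of_int p) * e (G (m + p)) c
                              + lam * of_int (m + 1) * e (H (m + p)) c))"
| "br0 lam (I m) (G p) = (\<lambda>c. of_int (m - 2 * p) * e (H (m + p)) c)"
| "br0 lam (G p) (I m) = (\<lambda>c. - of_int (m - 2 * p) * e (H (m + p)) c)"
| "br0 lam (G p) (G q) = e (I (p + q))"
| "br0 lam _ _ = (\<lambda>c. 0)"

definition brk :: "complex \<Rightarrow> elem \<Rightarrow> elem \<Rightarrow> elem" where
  "brk lam x y = (\<lambda>c. \<Sum>a\<in>supp x. \<Sum>b\<in>supp y. x a * y b * br0 lam a b c)"

definition is_even_elem :: "elem \<Rightarrow> bool" where
  "is_even_elem x \<longleftrightarrow> (\<forall>b\<in>supp x. \<not> is_odd_basis b)"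

definition is_odd_elem :: "elem \<Rightarrow> bool" where
  "is_odd_elem x \<longleftrightarrow> (\<forall>b\<in>supp x. is_odd_basis b)"

definition in_degree :: "int \<Rightarrow> elem \<Rightarrow> bool" where
  "in_degree q x \<longleftrightarrow> (\<forall>b\<in>supp x. idx b = q)"

definition linear_on_Alg :: "(elem \<Rightarrow> elem) \<Rightarrow> bool" where
  "linear_on_Alg D \<longleftrightarrow> (\<forall>x\<in>Alg. D x \<in> Alg) \<and>
     (\<forall>x\<in>Alg. \<forall>y\<in>Alg. D (\<lambda>c. x c + y c) = (\<lambda>c. D x c + D y c)) \<and>
     (\<forall>x\<in>Alg. \<forall>k::complex. D (\<lambda>c. k * x c) = (\<lambda>c. k * D x c))"

definition odd_superderivation :: "complex \<Rightarrow> (elem \<Rightarrow> elem) \<Rightarrow> bool" where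
  "odd_superderivation lam D \<longleftrightarrow> linear_on_Alg D \<and>
     (\<forall>x\<in>Alg. is_even_elem x \<longrightarrow> is_odd_elem (D x)) \<and>
     (\<forall>x\<in>Alg. is_odd_elem x \<longrightarrow> is_even_elem (D x)) \<and>
     (\<forall>x\<in>Alg. \<forall>y\<in>Alg. (is_even_elem x \<or> is_odd_elem x) \<longrightarrow> (is_even_elem y \<or> is_odd_elem y) \<longrightarrow>
        (is_even_elem x \<longrightarrow> D (brk lam x y) = (\<lambda>c. brk lam (D x) y c + brk lam x (D y) c)) \<and>
        (is_odd_elem x \<longrightarrow> D (brk lam x y) = (\<lambda>c. brk lam (D x) y c - brk lam x (D y) c)))"

definition has_degree :: "int \<Rightarrow> (elem \<Rightarrow> elem) \<Rightarrow> bool" where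
  "has_degree r D \<longleftrightarrow> (\<forall>q. \<forall>x\<in>Alg. in_degree q x \<longrightarrow> in_degree (q + r) (D x))"

end

theory Submission imports Defs begin

lemma supp_e[simp]: "supp (e b) = {b}"
  by (auto simp: supp_def e_def)

lemma e_Alg[simp]: "e b \<in> Alg"
  by (simp add: Alg_def)

lemma comb_Alg: "x \<in> Alg \<Longrightarrow> y \<in> Alg \<Longrightarrow> (\<lambda>c. u * x c + v * y c) \<in> Alg"
  unfolding Alg_def mem_Collect_eq
  by (rule finite_subset[of _ "supp x \<union> supp y"]) (auto simp: supp_def)

lemma smul_Alg: "x \<in> Alg \<Longrightarrow> (\<lambda>c. u * x c) \<in> Alg"
  unfolding Alg_def mem_Collect_eq
  by (rule finite_subset[of _ "supp x"]) (auto simp: supp_def)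

lemma brk_fin:
  assumes "finite S" "finite T" "supp x \<subseteq> S" "supp y \<subseteq> T"
  shows "brk lam x y c = (\<Sum>a\<in>S. \<Sum>b\<in>T. x a * y b * br0 lam a b c)"
proof -
  have fx: "finite (supp x)" using assms finite_subset by blast
  have fy: "finite (supp y)" using assms finite_subset by blast
  have inner: "(\<Sum>b\<in>supp y. x a * y b * br0 lam a b c) = (\<Sum>b\<in>T. x a * y b * br0 lam a b c)" for a
    by (rule sum.mono_neutral_left) (use assms fy in \<open>auto simp: supp_def\<close>)
  have "brk lam x y c = (\<Sum>a\<in>supp x. \<Sum>b\<in>T. x a * y b * br0 lam a b c)"
    unfolding brk_def using inner by simp
  also have "\<dots> = (\<Sum>a\<in>S. \<Sum>b\<in>T. x a * y b * br0 lam a b c)"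
    by (rule sum.mono_neutral_left) (use assms fx in \<open>auto simp: supp_def\<close>)
  finally show ?thesis .
qed

lemma brk_e[simp]: "brk lam (e a) (e b) = br0 lam a b"
  unfolding brk_def supp_e by (simp add: e_def)

lemma brk_add1:
  assumes "x \<in> Alg" "x' \<in> Alg" "y \<in> Alg"
  shows "brk lam (\<lambda>c. u * x c + v * x' c) y = (\<lambda>c. u * brk lam x y c + v * brk lam x' y c)"
proof
  fix c
  let ?S = "supp x \<union> supp x'"
  have f: "finite ?S" "finite (supp y)" using assms by (auto simp: Alg_def)
  have s: "supp (\<lambda>c. u * x c + v * x' c) \<subseteq> ?S" by (auto simp: supp_def)
  show "brk lam (\<lambda>c. u * x c + v * x' c) y c = u * brk lam x y c + v * brk lam x' y c"
    apply (subst brk_fin[OF f s subset_refl])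
    apply (subst brk_fin[OF f _ subset_refl, of x]) apply blast
    apply (subst brk_fin[OF f _ subset_refl, of x']) apply blast
    by (simp add: sum_distrib_left sum.distrib algebra_simps)
qed

lemma brk_add2:
  assumes "x \<in> Alg" "y \<in> Alg" "y' \<in> Alg"
  shows "brk lam x (\<lambda>c. u * y c + v * y' c) = (\<lambda>c. u * brk lam x y c + v * brk lam x y' c)"
proof
  fix c
  let ?T = "supp y \<union> supp y'"
  have f: "finite (supp x)" "finite ?T" using assms by (auto simp: Alg_def)
  have s: "supp (\<lambda>c. u * y c + v * y' c) \<subseteq> ?T" by (auto simp: supp_def)
  show "brk lam x (\<lambda>c. u * y c + v * y' c) c = u * brk lam x y c + v * brk lam x y' c"
    apply (subst brk_fin[OF f subset_refl s])
    apply (subst brk_fin[OF f subset_refl, of y]) apply blast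
    apply (subst brk_fin[OF f subset_refl, of y']) apply blast
    by (simp add: sum_distrib_left sum.distrib algebra_simps)
qed


lemma e_apply: "e b c = (if c = b then 1 else 0)"
  by (simp add: e_def)

lemma even_e: "is_even_elem (e b) \<longleftrightarrow> \<not> is_odd_basis b"
  by (simp add: is_even_elem_def)
lemma odd_e: "is_odd_elem (e b) \<longleftrightarrow> is_odd_basis b"
  by (simp add: is_odd_elem_def)

locale osd =
  fixes lam :: complex and D :: "elem \<Rightarrow> elem"
  assumes sd: "odd_superderivation lam D" and dg: "has_degree 0 D"
begin

lemma DAlg: "x \<in> Alg \<Longrightarrow> D x \<in> Alg"
  using sd by (simp add: odd_superderivation_def linear_on_Alg_def)

lemma Dadd: "x \<in> Alg \<Longrightarrow> y \<in> Alg \<Longrightarrow> D (\<lambda>c. x c + y c) = (\<lambda>c. D x c + D y c)"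
  using sd by (simp add: odd_superderivation_def linear_on_Alg_def)

lemma Dsmul: "x \<in> Alg \<Longrightarrow> D (\<lambda>c. k * x c) = (\<lambda>c. k * D x c)"
  using sd by (simp add: odd_superderivation_def linear_on_Alg_def)

lemma Dcomb: "x \<in> Alg \<Longrightarrow> y \<in> Alg \<Longrightarrow> D (\<lambda>c. u * x c + v * y c) = (\<lambda>c. u * D x c + v * D y c)"
proof -
  assume a: "x \<in> Alg" "y \<in> Alg"
  have "D (\<lambda>c. u * x c + v * y c) = (\<lambda>c. D (\<lambda>c. u * x c) c + D (\<lambda>c. v * y c) c)"
    using Dadd[OF smul_Alg[OF a(1)] smul_Alg[OF a(2)]] by simp
  also have "\<dots> = (\<lambda>c. u * D x c + v * D y c)" using Dsmul a by simp
  finally show ?thesis .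
qed

lemma Dzero: "D (\<lambda>c. 0) = (\<lambda>c. 0)"
  using Dsmul[of "e (L 0)" 0] by simp

lemma deriv_gen: "(is_even_elem (e x) \<longrightarrow> D (brk lam (e x) (e y)) = (\<lambda>c. brk lam (D (e x)) (e y) c + brk lam (e x) (D (e y)) c)) \<and>
        (is_odd_elem (e x) \<longrightarrow> D (brk lam (e x) (e y)) = (\<lambda>c. brk lam (D (e x)) (e y) c - brk lam (e x) (D (e y)) c))"
proof -
  have H: "\<forall>x\<in>Alg. \<forall>y\<in>Alg. (is_even_elem x \<or> is_odd_elem x) \<longrightarrow> (is_even_elem y \<or> is_odd_elem y) \<longrightarrow>
        (is_even_elem x \<longrightarrow> D (brk lam x y) = (\<lambda>c. brk lam (D x) y c + brk lam x (D y) c)) \<and>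
        (is_odd_elem x \<longrightarrow> D (brk lam x y) = (\<lambda>c. brk lam (D x) y c - brk lam x (D y) c))"
    using sd unfolding odd_superderivation_def by blast
  have "is_even_elem (e x) \<or> is_odd_elem (e x)" "is_even_elem (e y) \<or> is_odd_elem (e y)"
    by (auto simp: even_e odd_e)
  then show ?thesis using H[rule_format, OF e_Alg e_Alg] by blast
qed

lemma deriv_even: "\<not> is_odd_basis x \<Longrightarrow>
  D (br0 lam x y) = (\<lambda>c. brk lam (D (e x)) (e y) c + brk lam (e x) (D (e y)) c)"
  using deriv_gen[of x y] by (simp add: even_e)

lemma deriv_odd: "is_odd_basis x \<Longrightarrow>
  D (br0 lam x y) = (\<lambda>c. brk lam (D (e x)) (e y) c - brk lam (e x) (D (e y)) c)"
  using deriv_gen[of x y] by (simp add: odd_e)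

lemma supp_D: "b \<in> supp (D (e a)) \<Longrightarrow> idx b = idx a \<and> is_odd_basis b = (\<not> is_odd_basis a)"
proof -
  assume b: "b \<in> supp (D (e a))"
  have "in_degree (idx a) (e a)" by (simp add: in_degree_def)
  hence "in_degree (idx a + 0) (D (e a))" using dg e_Alg unfolding has_degree_def by blast
  hence 1: "idx b = idx a" using b by (simp add: in_degree_def)
  have "is_odd_basis b = (\<not> is_odd_basis a)"
  proof (cases "is_odd_basis a")
    case True
    hence "is_even_elem (D (e a))" using sd unfolding odd_superderivation_def
      by (simp add: odd_e)
    then show ?thesis using b True by (simp add: is_even_elem_def)
  next
    case False
    hence "is_odd_elem (D (e a))" using sd unfolding odd_superderivation_def
      by (simp add: even_e)
    then show ?thesis using b False by (simp add: is_odd_elem_def)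
  qed
  with 1 show ?thesis by simp
qed

lemma Dz: "idx b \<noteq> idx a \<or> is_odd_basis b = is_odd_basis a \<Longrightarrow> D (e a) b = 0"
  using supp_D[of b a] by (auto simp: supp_def)

definition "cLG m = D (e (L m)) (G m)"
definition "cLH m = D (e (L m)) (H m)"
definition "cIG m = D (e (I m)) (G m)"
definition "cIH m = D (e (I m)) (H m)"
definition "cGL m = D (e (G m)) (L m)"
definition "cGI m = D (e (G m)) (I m)"
definition "cHL m = D (e (H m)) (L m)"
definition "cHI m = D (e (H m)) (I m)"

lemma repL: "D (e (L m)) = (\<lambda>c. cLG m * e (G m) c + cLH m * e (H m) c)"
  apply (rule ext) subgoal for c
    by (cases c) (auto simp: cLG_def cLH_def e_apply intro!: Dz simp: idx_def is_odd_basis_def)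
  done
lemma repI: "D (e (I m)) = (\<lambda>c. cIG m * e (G m) c + cIH m * e (H m) c)"
  apply (rule ext) subgoal for c
    by (cases c) (auto simp: cIG_def cIH_def e_apply intro!: Dz simp: idx_def is_odd_basis_def)
  done
lemma repG: "D (e (G m)) = (\<lambda>c. cGL m * e (L m) c + cGI m * e (I m) c)"
  apply (rule ext) subgoal for c
    by (cases c) (auto simp: cGL_def cGI_def e_apply intro!: Dz simp: idx_def is_odd_basis_def)
  done
lemma repH: "D (e (H m)) = (\<lambda>c. cHL m * e (L m) c + cHI m * e (I m) c)"
  apply (rule ext) subgoal for c
    by (cases c) (auto simp: cHL_def cHI_def e_apply intro!: Dz simp: idx_def is_odd_basis_def)
  done


lemmas rep = repL repI repG repH
lemmas ev = brk_add1[OF e_Alg e_Alg e_Alg] brk_add2[OF e_Alg e_Alg e_Alg] Dsmul[OF e_Alg] Dcomb[OF e_Alg e_Alg] Dzero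

lemmas S = rep ev e_apply is_odd_basis_def

lemma E_LL: "of_int(m-n)*cLH(m+n) = - cLG m * lam * of_int(n+1) - cLH m * (of_int n/2 - of_int m) + cLG n * lam * of_int(m+1) + cLH n*(of_int m/2 - of_int n)"
  using fun_cong[OF deriv_even[of "L m" "L n"], of "H (m+n)"] apply (simp add: rep ev is_odd_basis_def) apply (simp_all add: e_apply)? apply (simp_all add: algebra_simps)? done

lemma E_LG: "(of_int m/2 - of_int p)*cGI(m+p) + lam*of_int(m+1)*cHI(m+p) = cLG m + cGI p * of_int(m-p)"
  using fun_cong[OF deriv_even[of "L m" "G p"], of "I (m+p)"] apply (simp add: rep ev is_odd_basis_def) apply (simp_all add: e_apply)? apply (simp_all add: algebra_simps)? done

lemma E_GG: "cIH(p+q) = cGL p * lam * of_int(p+1) + cGI p * of_int(p-2*q) + cGL q * lam * of_int(q+1) + cGI q * of_int(q-2*p)"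
  using fun_cong[OF deriv_odd[of "G p" "G q"], of "H (p+q)"] apply (simp add: rep ev is_odd_basis_def) apply (simp_all add: e_apply)? apply (simp_all add: algebra_simps)? done

lemma E_GH: "0 = cGL p*(of_int p/2 - of_int q) + cHL q * lam * of_int(q+1) + cHI q * of_int(q-2*p)"
  using fun_cong[OF deriv_odd[of "G p" "H q"], of "H (p+q)"] apply (simp add: rep ev is_odd_basis_def) apply (simp_all add: e_apply)? apply (simp_all add: algebra_simps)? done

lemma E_IGL: "of_int(m-2*p)*cHL(m+p) = 0"
  using fun_cong[OF deriv_even[of "I m" "G p"], of "L (m+p)"] apply (simp add: rep ev is_odd_basis_def) apply (simp_all add: e_apply)? apply (simp_all add: algebra_simps)? done

lemma E_IGI: "of_int(m-2*p)*cHI(m+p) = cIG m - cGL p * of_int(p-m)"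
  using fun_cong[OF deriv_even[of "I m" "G p"], of "I (m+p)"] apply (simp add: rep ev is_odd_basis_def) apply (simp_all add: e_apply)? apply (simp_all add: algebra_simps)? done

lemma E_II: "0 = - cIG m * of_int(n-2*m) + cIG n * of_int(m-2*n)"
  using fun_cong[OF deriv_even[of "I m" "I n"], of "H (m+n)"] apply (simp add: rep ev is_odd_basis_def) apply (simp_all add: e_apply)? apply (simp_all add: algebra_simps)? done

lemma lin_trick: "(x1::complex) - x2 = x3 - x4 \<Longrightarrow> x3 = x4 \<Longrightarrow> x1 = x2"
  by simp

lemma lin_trick2: "(x1::complex) - x2 = x4 - x3 \<Longrightarrow> x3 = x4 \<Longrightarrow> x1 = x2"
  by simp

lemma cHL0: "cHL k = 0"
proof (cases "k = 0")
  case True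
  from E_IGL[of 1 "-1"] True show ?thesis by simp
next
  case False
  from E_IGL[of k 0] False show ?thesis by simp
qed

lemma cIG0: "cIG k = 0"
proof -
  have 2: "cIG 2 = 0" using E_II[of 1 2] by simp
  have 0: "cIG 0 = 0" using E_II[of 0 2] 2 by simp
  show ?thesis
  proof (cases "k = 0")
    case True then show ?thesis using 0 by simp
  next
    case False then show ?thesis using E_II[of 0 k] 0 by simp
  qed
qed

lemma cHI0_nz: "p \<noteq> 0 \<Longrightarrow> cHI p = 0 \<and> cGL p = 0"
proof -
  assume p: "p \<noteq> 0"
  have 1: "- 2 * of_int p * cHI p = - cGL p * of_int p" using E_IGI[of 0 p] cIG0 by (simp add: algebra_simps)
  have 2: "0 = cGL p * (- of_int p / 2) - cHI p * of_int p" using E_GH[of p p] cHL0 by (simp add: algebra_simps)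
  have pp: "(of_int p :: complex) \<noteq> 0" using p by simp
  have a0: "(2 * cHI p - cGL p) * of_int p = 0" using 1 by (simp add: algebra_simps)
  have b0: "(cGL p + 2 * cHI p) * of_int p = 0" using 2 by (simp add: field_simps)
  have a: "2 * cHI p = cGL p" using a0 pp by simp
  have b: "cGL p = - 2 * cHI p" using b0 pp by (simp add: add_eq_0_iff)
  from a b show ?thesis by simp
qed

lemma cHI0: "cHI k = 0" and cGL0: "cGL k = 0"
proof -
  have h0: "cHI 0 = 0" using E_IGI[of 1 "-1"] cIG0 cHI0_nz[of "-1"] by simp
  have g0: "cGL 0 = 0" using E_IGI[of 1 0] cIG0 cHI0_nz[of 1] by simp
  show "cHI k = 0" using h0 cHI0_nz by (cases "k = 0") auto
  show "cGL k = 0" using g0 cHI0_nz by (cases "k = 0") auto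
qed

lemma cGI_sym: "cGI (-p) = cGI p"
proof (cases "p = 0")
  case True then show ?thesis by simp
next
  case False
  have "cIH 0 = 0" using E_GG[of 0 0] cGL0 by simp
  then have "0 = cGI p * of_int (3*p) - cGI (-p) * of_int (3*p)"
    using E_GG[of p "-p"] cGL0 by (simp add: algebra_simps)
  then have "cGI p * of_int (3*p) = cGI (-p) * of_int (3*p)" by simp
  then show ?thesis using False by simp
qed

lemma cGI_const: "cGI m = cGI 0"
proof (cases "m = 0")
  case True then show ?thesis by simp
next
  case False
  have 1: "(of_int m/2)*cGI m = cLG m + cGI 0 * of_int m"
    using E_LG[of m 0] cHI0 by simp
  have 2: "(of_int m/2 + of_int m)*cGI 0 = cLG m + cGI m * of_int (2*m)"
    using E_LG[of m "-m"] cHI0 cGI_sym[of m] by (simp add: algebra_simps)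
  have L: "cLG m = of_int m / 2 * cGI m - cGI 0 * of_int m"
    apply (rule lin_trick2[OF _ 1]) by (simp add: field_simps)
  have "(cGI 0 - cGI m) * (5 * of_int m / 2) = 0"
    apply (rule lin_trick[OF _ 2[unfolded L]]) by (simp add: field_simps)
  then show ?thesis using False by simp
qed

lemma cLG_val: "cLG m = - of_int m * cGI 0 / 2"
proof -
  have h: "(of_int m/2)*cGI 0 = cLG m + cGI 0 * of_int m"
    using E_LG[of m 0] cHI0[of m] cGI_const[of m] by simp
  show ?thesis apply (rule lin_trick2[OF _ h]) by (simp add: field_simps)
qed

lemma cIH_val: "cIH p = - of_int p * cGI 0"
  using E_GG[of p 0] cGL0 cGI_const[of p] by (simp add: algebra_simps)

definition "rho m = cLH m + cGI 0 * lam * (of_int m + 1)"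

lemma R: "of_int(m-n)*rho(m+n) = - rho m * (of_int n/2 - of_int m) + rho n*(of_int m/2 - of_int n)"
  unfolding rho_def
  apply (rule lin_trick[OF _ E_LL[of m n]]) unfolding cLG_val by (simp add: field_simps)

lemma rho0: "rho 0 = 0"
  using R[of 1 0] by simp

lemma rho_neg: "rho (-m) = - rho m"
proof (cases "m = 0")
  case True then show ?thesis using rho0 by simp
next
  case False
  have h: "of_int(m - -m)*rho(m + -m) = - rho m * (of_int (-m)/2 - of_int m) + rho (-m)*(of_int m/2 - of_int (-m))"
    by (rule R)
  have "(rho (-m) + rho m) * (3 * of_int m / 2) = 0"
    apply (rule lin_trick2[OF _ h]) using rho0 by (simp add: field_simps)
  then show ?thesis using False by (simp add: add_eq_0_iff)
qed

lemma rho2: "rho 2 = 2 * rho 1"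
proof -
  have h1: "of_int(2-1)*rho(2+1) = - rho 2 * (of_int 1/2 - of_int 2) + rho 1*(of_int 2/2 - of_int 1)"
    by (rule R)
  have r3: "rho 3 = 3/2 * rho 2"
    apply (rule lin_trick[OF _ h1]) by (simp add: field_simps)
  have h2: "of_int(3 - -1)*rho(3 + -1) = - rho 3 * (of_int (-1)/2 - of_int 3) + rho (-1)*(of_int 3/2 - of_int (-1))"
    by (rule R)
  have "(rho 2 - 2 * rho 1) * (5/4) = 0"
    apply (rule lin_trick2[OF _ h2]) using r3 rho_neg[of 1] by (simp add: field_simps)
  then show ?thesis by simp
qed

lemma rho_nat: "rho (int (Suc k)) = of_nat (Suc k) * rho 1"
proof (induction k)
  case 0 then show ?case by simp
next
  case (Suc k)
  show ?case
  proof (cases "k = 0")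
    case True then show ?thesis using rho2 by simp
  next
    case False
    define m where "m = int (Suc k)"
    have mge: "m \<ge> 2" using False m_def by simp
    have IH: "rho m = of_int m * rho 1" using Suc.IH m_def by simp
    have h: "of_int(m-1)*rho(m+1) = - rho m * (of_int 1/2 - of_int m) + rho 1*(of_int m/2 - of_int 1)"
      by (rule R)
    have "(rho (m+1) - (of_int m + 1) * rho 1) * (of_int m - 1) = 0"
      apply (rule lin_trick[OF _ h]) using IH by (simp add: field_simps)
    moreover have "(of_int m - 1 :: complex) \<noteq> 0"
    proof
      assume "(of_int m - 1 :: complex) = 0"
      then have "(of_int m :: complex) = of_int 1" by simp
      then have "m = 1" by (simp only: of_int_eq_iff)
      with mge show False by simp
    qed
    ultimately have "rho (m+1) = (of_int m + 1) * rho 1" by simp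
    then show ?thesis using m_def by simp
  qed
qed

lemma rho_val: "rho m = of_int m * rho 1"
proof (cases "m > 0")
  case True
  then obtain k where "m = int (Suc k)" by (metis Suc_pred of_nat_0_less_iff pos_int_cases)
  then show ?thesis using rho_nat[of k] by simp
next
  case False
  show ?thesis
  proof (cases "m = 0")
    case True then show ?thesis using rho0 by simp
  next
    case F2: False
    with False obtain k where k: "-m = int (Suc k)" by (metis add.inverse_inverse neg_less_0_iff_less not_less_iff_gr_or_eq Suc_pred of_nat_0_less_iff pos_int_cases)
    have "rho (-m) = - rho m" by (rule rho_neg)
    then show ?thesis using rho_nat[of k] k by (metis add.inverse_inverse mult_minus_left of_int_minus of_int_of_nat_eq)
  qed
qed

lemma cLH_val: "cLH m = of_int m * rho 1 - cGI 0 * lam * (of_int m + 1)"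
  using rho_val[of m] unfolding rho_def by (simp add: algebra_simps)

definition "za = cGI 0"
definition "zb = - 2 * rho 1"
definition "z = (\<lambda>c. za * e (G 0) c + zb * e (H 0) c)"

lemma z_Alg: "z \<in> Alg" unfolding z_def by (rule comb_Alg) simp_all

lemma basis_ok: "D (e x) = brk lam z (e x)"
proof (cases x)
  case (L m)
  show ?thesis unfolding L repL z_def brk_add1[OF e_Alg e_Alg e_Alg] brk_e
    by (rule ext) (simp add: e_apply cLG_val cLH_val za_def zb_def field_simps)
next
  case (I m)
  show ?thesis unfolding I repI z_def brk_add1[OF e_Alg e_Alg e_Alg] brk_e
    by (rule ext) (simp add: e_apply cIG0 cIH_val za_def zb_def field_simps)
next
  case (G m)
  show ?thesis unfolding G repG z_def brk_add1[OF e_Alg e_Alg e_Alg] brk_e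
    by (rule ext) (simp add: e_apply cGL0 cGI_const[of m] za_def zb_def)
next
  case (H m)
  show ?thesis unfolding H repH z_def brk_add1[OF e_Alg e_Alg e_Alg] brk_e
    by (rule ext) (simp add: e_apply cHL0 cHI0)
qed

lemma all_ok: "finite S \<Longrightarrow> supp x \<subseteq> S \<Longrightarrow> D x = brk lam z x"
proof (induction S arbitrary: x rule: finite_induct)
  case empty
  then have "x = (\<lambda>c. 0)" by (auto simp: supp_def)
  moreover have "brk lam z (\<lambda>c. 0) = (\<lambda>c. 0)" by (simp add: brk_def supp_def)
  ultimately show ?case using Dzero by simp
next
  case (insert b S)
  define x' where "x' = x(b := 0)"
  have sx': "supp x' \<subseteq> S" using insert.prems by (auto simp: x'_def supp_def)
  have x'A: "x' \<in> Alg" using sx' insert.hyps(1) finite_subset unfolding Alg_def by blast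
  have xx: "x = (\<lambda>c. 1 * x' c + x b * e b c)" by (rule ext) (simp add: x'_def e_apply)
  have "D x = D (\<lambda>c. 1 * x' c + x b * e b c)" by (rule arg_cong[OF xx])
  also have "\<dots> = (\<lambda>c. 1 * D x' c + x b * D (e b) c)" by (rule Dcomb[OF x'A e_Alg])
  also have "\<dots> = (\<lambda>c. 1 * brk lam z x' c + x b * brk lam z (e b) c)"
    using insert.IH[OF sx'] basis_ok by simp
  also have "\<dots> = brk lam z (\<lambda>c. 1 * x' c + x b * e b c)" by (rule brk_add2[OF z_Alg x'A e_Alg, symmetric])
  also have "\<dots> = brk lam z x" using xx by simp
  finally show ?case .
qed

lemma final: "\<exists>a b :: complex. \<forall>x\<in>Alg. D x = brk lam (\<lambda>c. a * e (G 0) c + b * e (H 0) c) x"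
  using all_ok[OF _ subset_refl] unfolding z_def Alg_def by blast

end

theorem lemma2p5:
  fixes lam :: complex and D :: "elem \<Rightarrow> elem"
  assumes "odd_superderivation lam D"
    and "has_degree 0 D"
  shows "\<exists>a b :: complex. \<forall>x\<in>Alg.
           D x = brk lam (\<lambda>c. a * e (G 0) c + b * e (H 0) c) x"
proof -
  interpret osd lam D using assms by unfold_locales
  show ?thesis by (rule final)
qed

end
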